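(* Let $K$ be a positive integer, let $T>0$, and set $\omega_0 = \frac{2\pi}{T}$. Let $N$ be an integer and let $0\leq t_1<t_2<\cdots<t_N < T$. Define the $(N-1)\times(2K+1)$ complex matrix $\mathbf{A}$ whose columns are indexed by $k\in\{-K,\dots,K\}$ and whose rows are indexed by $n\in\{1,\dots,N-1\}$, with entries $$\mathbf{A}_{n,k} = e^{jk\omega_0 t_{n+1}} - e^{jk\omega_0 t_{n}} \quad (k\neq 0), \qquad \mathbf{A}_{n,0} = t_{n+1}-t_n .$$ Then $\mathbf{A}$ is left-invertible (i.e., has full column rank) provided that $N \geq 2K+2$.
   Context: Here $j$ denotes the imaginary unit. The columns are ordered $k=-K,\dots,-1,0,1,\dots,K$, so the middle column is $(t_2-t_1, t_3-t_2,\dots,t_N-t_{N-1})^\top$. *)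

theory Defs
  imports Complex_Main "Jordan_Normal_Form.Matrix"
begin

text \<open>The (N-1) x (2K+1) matrix A. Row index i (0-based) corresponds to n = i+1,
  column index c (0-based) corresponds to k = c - K. The sample times are t 1, ..., t N.\<close>
definition samp_mat :: "nat \<Rightarrow> real \<Rightarrow> nat \<Rightarrow> (nat \<Rightarrow> real) \<Rightarrow> complex mat" where
  "samp_mat K T N t = mat (N - 1) (2 * K + 1) (\<lambda>(i, c).
     let n = i + 1; k = int c - int K; w0 = 2 * pi / T in
     if k = 0 then complex_of_real (t (n + 1) - t n)
     else exp (\<i> * of_int k * of_real w0 * of_real (t (n + 1)))
        - exp (\<i> * of_int k * of_real w0 * of_real (t n)))"

end

theory Submission
  imports Defs "HOL-Computational_Algebra.Polynomial" "Jordan_Normal_Form.Determinant"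
begin


definition ee :: "nat \<Rightarrow> real \<Rightarrow> real \<Rightarrow> nat \<Rightarrow> complex" where
  "ee K T s m = exp (\<i> * of_real ((real m - real K) * (2 * pi / T) * s))"

lemma ee_aux: "- (\<i> * of_real (real K * w * s)) + of_nat m * (\<i> * of_real (w * s)) = \<i> * of_real ((real m - real K) * w * s)"
  by (simp add: algebra_simps)

lemma ee_pow: "ee K T s m = exp (- (\<i> * of_real (real K * (2 * pi / T) * s))) * exp (\<i> * of_real ((2 * pi / T) * s)) ^ m"
proof -
  have "exp (\<i> * of_real ((2 * pi / T) * s)) ^ m = exp (of_nat m * (\<i> * of_real ((2 * pi / T) * s)))"
    by (simp only: exp_of_nat_mult)
  then have "exp (- (\<i> * of_real (real K * (2 * pi / T) * s))) * exp (\<i> * of_real ((2 * pi / T) * s)) ^ m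
     = exp (- (\<i> * of_real (real K * (2 * pi / T) * s)) + of_nat m * (\<i> * of_real ((2 * pi / T) * s)))"
    by (simp add: mult_exp_exp)
  also have "- (\<i> * of_real (real K * (2 * pi / T) * s)) + of_nat m * (\<i> * of_real ((2 * pi / T) * s))
     = \<i> * of_real ((real m - real K) * (2 * pi / T) * s)"
    by (rule ee_aux)
  finally show ?thesis by (simp add: ee_def)
qed

lemma ee_K[simp]: "ee K T s K = 1"
  by (simp add: ee_def)

lemma E_neq:
  assumes T: "T > 0" and a: "0 \<le> a" "a < b" "b < T"
  shows "exp (\<i> * of_real ((2 * pi / T) * a)) \<noteq> exp (\<i> * of_real ((2 * pi / T) * b))"
proof
  let ?w = "2 * pi / T"
  assume eq: "exp (\<i> * of_real (?w * a)) = exp (\<i> * of_real (?w * b))"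
  then have "cis (?w * a) = cis (?w * b)" by (simp add: cis_conv_exp)
  then have "cis (?w * b - ?w * a) = 1" by (metis cis_divide cis_neq_zero divide_self)
  then have "cos (?w * b - ?w * a) = 1" by (metis cis.sel(1) one_complex.sel(1))
  then obtain n :: int where n: "?w * b - ?w * a = real_of_int n * 2 * pi" using cos_one_2pi_int by blast
  have w: "?w > 0" using T by simp
  have "?w * a < ?w * b" by (rule mult_strict_left_mono[OF a(2) w])
  then have "?w * b - ?w * a > 0" by linarith
  moreover have "?w * b - ?w * a < 2 * pi"
  proof -
    have "?w * b < ?w * T" by (rule mult_strict_left_mono[OF a(3) w])
    moreover have "?w * a \<ge> 0" using w a by simp
    ultimately show ?thesis using T by simp
  qed
  ultimately have h: "0 < real_of_int n * (2 * pi)" "real_of_int n * (2 * pi) < 1 * (2 * pi)"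
    using n[unfolded mult.assoc] by linarith+
  have "0 < real_of_int n" using h(1) pi_gt_zero by (simp add: zero_less_mult_iff)
  moreover have "real_of_int n < 1" using h(2) by (rule mult_right_less_imp_less) simp
  ultimately have "0 < n" "n < 1" by simp_all
  then show False by linarith
qed

lemma trig_zero:
  fixes d :: "nat \<Rightarrow> complex" and S :: "real set"
  assumes T: "T > 0" and S: "S \<subseteq> {0..<T}" and card: "card S \<ge> 2 * K + 1"
    and z: "\<And>s. s \<in> S \<Longrightarrow> (\<Sum>m\<le>2*K. d m * ee K T s m) = 0"
  shows "\<And>m. m \<le> 2 * K \<Longrightarrow> d m = 0"
proof -
  define p where "p = (\<Sum>m\<le>2*K. monom (d m) m)"
  have fin: "finite S" using card card.infinite by fastforce
  have poly: "poly p x = (\<Sum>m\<le>2*K. d m * x ^ m)" for x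
    by (simp add: p_def poly_sum poly_monom)
  define E where "E s = exp (\<i> * of_real ((2 * pi / T) * s))" for s
  have root: "poly p (E s) = 0" if "s \<in> S" for s
  proof -
    have "(\<Sum>m\<le>2*K. d m * ee K T s m) = exp (- (\<i> * of_real (real K * (2 * pi / T) * s))) * poly p (E s)"
      by (simp add: poly ee_pow E_def sum_distrib_left algebra_simps)
    then show ?thesis using z[OF that] by simp
  qed
  have inj: "inj_on E S"
  proof (rule inj_onI)
    fix x y assume xy: "x \<in> S" "y \<in> S" "E x = E y"
    show "x = y"
    proof (rule ccontr)
      assume "x \<noteq> y"
      have x: "0 \<le> x" "x < T" and y: "0 \<le> y" "y < T" using xy(1,2) S by auto
      consider "x < y" | "y < x" using \<open>x \<noteq> y\<close> by linarith
      then show False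
      proof cases
        case 1
        show False using E_neq[OF T x(1) 1 y(2)] xy(3) unfolding E_def by simp
      next
        case 2
        show False using E_neq[OF T y(1) 2 x(2)] xy(3) unfolding E_def by simp
      qed
    qed
  qed
  have p0: "p = 0"
  proof (rule ccontr)
    assume np: "p \<noteq> 0"
    have "degree p \<le> 2 * K" unfolding p_def
      by (rule degree_sum_le) (auto intro: order.trans[OF degree_monom_le])
    moreover have "card (E ` S) \<le> card {x. poly p x = 0}"
      by (rule card_mono) (use poly_roots_finite[OF np] root in auto)
    moreover have "card (E ` S) = card S" using inj by (simp add: card_image)
    ultimately show False using card_poly_roots_bound[OF np] card by linarith
  qed
  fix m assume m: "m \<le> 2 * K"
  have "coeff p m = d m" unfolding p_def coeff_sum coeff_monom using m by simp
  then show "d m = 0" using p0 by simp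
qed



definition FF :: "nat \<Rightarrow> real \<Rightarrow> nat \<Rightarrow> real \<Rightarrow> complex" where
  "FF K T m x = (if m = K then of_real x else ee K T x m)"

definition GG :: "nat \<Rightarrow> real \<Rightarrow> (nat \<Rightarrow> complex) \<Rightarrow> real \<Rightarrow> complex" where
  "GG K T c x = (\<Sum>m\<le>2*K. c m * FF K T m x)"

definition aa :: "nat \<Rightarrow> real \<Rightarrow> (nat \<Rightarrow> complex) \<Rightarrow> nat \<Rightarrow> complex" where
  "aa K T c m = c m * (if m = K then 1 else \<i> * of_real ((real m - real K) * (2 * pi / T)))"

definition QQ :: "nat \<Rightarrow> real \<Rightarrow> (nat \<Rightarrow> complex) \<Rightarrow> real \<Rightarrow> complex" where
  "QQ K T c x = (\<Sum>m\<le>2*K. aa K T c m * ee K T x m)"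

lemma exp_deriv:
  "((\<lambda>x::real. exp (\<i> * of_real (r*x))) has_derivative
     (\<lambda>h. of_real h * (\<i> * of_real r * exp(\<i> * of_real (r*x))))) (at x)"
proof -
  have "((\<lambda>z. exp (\<i> * (of_real r * z))) has_field_derivative (\<i> * of_real r * exp(\<i> * of_real (r*x)))) (at (of_real x))"
    by (auto intro!: derivative_eq_intros simp: algebra_simps)
  from has_derivative_compose[OF has_derivative_of_real[OF has_derivative_ident] this[unfolded has_field_derivative_def]]
  show ?thesis by (simp add: algebra_simps)
qed

lemma FF_deriv:
  "(FF K T m has_derivative (\<lambda>h. of_real h * (if m = K then 1 else \<i> * of_real ((real m - real K) * (2 * pi / T)) * ee K T x m))) (at x)"
proof (cases "m = K")
  case True
  then show ?thesis unfolding FF_def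
    by (auto intro!: derivative_eq_intros)
next
  case False
  have FFeq: "FF K T m = (\<lambda>x. ee K T x m)" using False by (simp add: FF_def fun_eq_iff)
  show ?thesis unfolding FFeq if_not_P[OF False] by (unfold ee_def) (rule exp_deriv)
qed

lemma GG_deriv:
  "(GG K T c has_derivative (\<lambda>h. of_real h * QQ K T c x)) (at x)"
proof -
  have "((\<lambda>x. \<Sum>m\<le>2*K. c m * FF K T m x) has_derivative
     (\<lambda>h. \<Sum>m\<le>2*K. c m * (of_real h * (if m = K then 1 else \<i> * of_real ((real m - real K) * (2 * pi / T)) * ee K T x m)))) (at x)"
    by (intro has_derivative_sum has_derivative_mult_right FF_deriv)
  moreover have "(\<lambda>h. \<Sum>m\<le>2*K. c m * (of_real h * (if m = K then 1 else \<i> * of_real ((real m - real K) * (2 * pi / T)) * ee K T x m)))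
     = (\<lambda>h. of_real h * QQ K T c x)"
    unfolding QQ_def aa_def sum_distrib_left
    by (intro ext sum.cong) auto
  ultimately show ?thesis unfolding GG_def by simp
qed

lemma t_strict:
  fixes t :: "nat \<Rightarrow> real" and i j N :: nat
  assumes inc: "\<And>n. 1 \<le> n \<Longrightarrow> n < N \<Longrightarrow> t n < t (n + 1)"
    and "1 \<le> i" "i < j" "j \<le> N"
  shows "t i < t j"
proof -
  have "Suc i \<le> j" using assms by simp
  then show ?thesis using assms(4)
  proof (induction j rule: dec_induct)
    case base
    then show ?case using inc[of i] assms by simp
  next
    case (step n)
    have "1 \<le> n" "n < N" using step.hyps assms by auto
    then have "t n < t (n + 1)" by (rule inc)
    moreover have "t i < t n" using step by simp
    ultimately show ?case by simp
  qed
qed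

lemma t_mono:
  fixes t :: "nat \<Rightarrow> real" and i j N :: nat
  assumes inc: "\<And>n. 1 \<le> n \<Longrightarrow> n < N \<Longrightarrow> t n < t (n + 1)"
    and "1 \<le> i" "i \<le> j" "j \<le> N"
  shows "t i \<le> t j"
proof (cases "i = j")
  case False
  then have "i < j" using assms by simp
  from t_strict[of N t i j, OF inc] this assms show ?thesis by simp
qed simp

lemma cnj_ee:
  assumes "m \<le> 2 * K"
  shows "cnj (ee K T s m) = ee K T s (2 * K - m)"
proof -
  have "(real (2*K - m) - real K) * w * s = - ((real m - real K) * w * s)" for w
    using assms by (simp add: of_nat_diff algebra_simps)
  then have h: "(real (2*K - m) - real K) * (2*pi/T) * s = - ((real m - real K) * (2*pi/T) * s)" .
  show ?thesis unfolding ee_def cis_conv_exp[symmetric] cis_cnj h ..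
qed

lemma Re_QQ:
  "complex_of_real (2 * Re (QQ K T c s)) = (\<Sum>m\<le>2*K. (aa K T c m + cnj (aa K T c (2*K - m))) * ee K T s m)"
proof -
  have "complex_of_real (2 * Re (QQ K T c s)) = QQ K T c s + cnj (QQ K T c s)"
    by (simp add: complex_add_cnj)
  also have "cnj (QQ K T c s) = (\<Sum>m\<le>2*K. cnj (aa K T c m) * ee K T s (2*K - m))"
    unfolding QQ_def by (simp add: cnj_ee)
  also have "\<dots> = (\<Sum>m\<le>2*K. cnj (aa K T c (2*K - m)) * ee K T s m)"
  proof -
    have "(\<Sum>m\<in>{0..2*K}. cnj (aa K T c m) * ee K T s (2*K - m)) =
          (\<Sum>m\<in>{0..2*K}. cnj (aa K T c (2*K + 0 - m)) * ee K T s (2*K - (2*K + 0 - m)))"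
      by (rule sum.atLeastAtMost_rev)
    also have "\<dots> = (\<Sum>m\<in>{0..2*K}. cnj (aa K T c (2*K - m)) * ee K T s m)"
      by (intro sum.cong) auto
    finally show ?thesis by (simp add: atLeast0AtMost)
  qed
  finally show ?thesis unfolding QQ_def by (simp add: sum.distrib algebra_simps)
qed



lemma re_zero:
  fixes K N :: nat and T :: real and t :: "nat \<Rightarrow> real" and c :: "nat \<Rightarrow> complex"
  assumes T: "T > 0" and t1: "0 \<le> t 1"
    and inc: "\<And>n. 1 \<le> n \<Longrightarrow> n < N \<Longrightarrow> t n < t (n + 1)"
    and tN: "t N < T" and N: "N \<ge> 2 * K + 2"
    and hyp: "\<And>n. 1 \<le> n \<Longrightarrow> n < N \<Longrightarrow> GG K T c (t (n + 1)) = GG K T c (t n)"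
  shows "Re (c K) = 0"
proof -
  have ex: "\<exists>s. t n < s \<and> s < t (n + 1) \<and> Re (QQ K T c s) = 0" if n: "1 \<le> n" "n < N" for n
  proof -
    let ?f = "\<lambda>x. Re (GG K T c x)"
    have der: "(?f has_derivative (\<lambda>h. Re (of_real h * QQ K T c x))) (at x)" for x
      by (rule has_derivative_Re[OF GG_deriv])
    have cont: "continuous_on {t n..t (n + 1)} ?f"
      using der by (meson continuous_at_imp_continuous_on has_derivative_continuous)
    obtain z where z: "t n < z" "z < t (n + 1)" "(\<lambda>h. Re (of_real h * QQ K T c z)) = (\<lambda>v. 0)"
      using Rolle_deriv[OF inc[OF n] _ cont der] hyp[OF n] by auto
    from fun_cong[OF z(3), of 1] have "Re (QQ K T c z) = 0" by simp
    with z show ?thesis by blast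
  qed
  then have "\<forall>n. \<exists>s. 1 \<le> n \<longrightarrow> n < N \<longrightarrow> t n < s \<and> s < t (n + 1) \<and> Re (QQ K T c s) = 0"
    by blast
  then obtain s where s: "\<And>n. 1 \<le> n \<Longrightarrow> n < N \<Longrightarrow> t n < s n \<and> s n < t (n + 1) \<and> Re (QQ K T c (s n)) = 0"
    by metis
  have smono: "s i < s j" if ij: "1 \<le> i" "i < j" "j < N" for i j
  proof -
    have "s i < t (i + 1)" using s[of i] ij by simp
    also have "t (i + 1) \<le> t j" using t_mono[of N t "i+1" j, OF inc] ij by simp
    also have "t j < s j" using s[of j] ij by simp
    finally show ?thesis .
  qed
  have inj: "inj_on s {1..<N}"
  proof (rule inj_onI)
    fix x y assume xy: "x \<in> {1..<N}" "y \<in> {1..<N}" "s x = s y"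
    show "x = y"
    proof (rule ccontr)
      assume "x \<noteq> y"
      then consider "x < y" | "y < x" by linarith
      then show False
      proof cases
        case 1 then show False using smono[of x y] xy by simp
      next
        case 2 then show False using smono[of y x] xy by simp
      qed
    qed
  qed
  let ?S = "s ` {1..<N}"
  have card: "card ?S \<ge> 2 * K + 1" using inj N by (simp add: card_image)
  have sub: "?S \<subseteq> {0..<T}"
  proof
    fix x assume "x \<in> ?S"
    then obtain n where n: "1 \<le> n" "n < N" and x: "x = s n" by auto
    have "0 \<le> t 1" by (rule t1)
    also have "t 1 \<le> t n" using t_mono[of N t 1 n, OF inc] n by simp
    also have "t n < s n" using s[OF n] by simp
    finally have "0 < x" using x by simp
    have "s n < t (n + 1)" using s[OF n] by simp
    also have "t (n + 1) \<le> t N" using t_mono[of N t "n+1" N, OF inc] n by simp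
    finally have "x < T" using x tN by simp
    with \<open>0 < x\<close> show "x \<in> {0..<T}" by simp
  qed
  define dd where "dd m = aa K T c m + cnj (aa K T c (2 * K - m))" for m
  have z: "(\<Sum>m\<le>2*K. dd m * ee K T x m) = 0" if "x \<in> ?S" for x
  proof -
    from that obtain n where n: "1 \<le> n" "n < N" and x: "x = s n" by auto
    have "Re (QQ K T c x) = 0" using s[OF n] x by simp
    then have "complex_of_real (2 * Re (QQ K T c x)) = 0" by simp
    then show ?thesis unfolding Re_QQ dd_def .
  qed
  have "dd K = 0" using trig_zero[OF T sub card z] by simp
  then have "aa K T c K + cnj (aa K T c K) = 0" by (simp add: dd_def)
  then have "complex_of_real (2 * Re (c K)) = 0" by (simp add: aa_def complex_add_cnj)
  then show ?thesis by simp
qed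

lemma all_zero:
  fixes K N :: nat and T :: real and t :: "nat \<Rightarrow> real" and c :: "nat \<Rightarrow> complex"
  assumes T: "T > 0" and t1: "0 \<le> t 1"
    and inc: "\<And>n. 1 \<le> n \<Longrightarrow> n < N \<Longrightarrow> t n < t (n + 1)"
    and tN: "t N < T" and N: "N \<ge> 2 * K + 2"
    and hyp: "\<And>n. 1 \<le> n \<Longrightarrow> n < N \<Longrightarrow> GG K T c (t (n + 1)) = GG K T c (t n)"
  shows "\<And>m. m \<le> 2 * K \<Longrightarrow> c m = 0"
proof -
  have r1: "Re (c K) = 0" by (rule re_zero[OF T t1 inc tN N hyp])
  define c' where "c' m = - \<i> * c m" for m
  have G': "GG K T c' x = - \<i> * GG K T c x" for x
    unfolding GG_def c'_def sum_distrib_left by (simp add: mult.assoc)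
  have hyp': "GG K T c' (t (n + 1)) = GG K T c' (t n)" if "1 \<le> n" "n < N" for n
    unfolding G' using hyp[OF that] by simp
  have "Re (c' K) = 0" by (rule re_zero[OF T t1 inc tN N hyp'])
  then have r2: "Im (c K) = 0" by (simp add: c'_def)
  have cK: "c K = 0" using r1 r2 by (simp add: complex_eq_iff)
  have Gee: "GG K T c x = (\<Sum>m\<le>2*K. c m * ee K T x m)" for x
    unfolding GG_def FF_def by (intro sum.cong) (auto simp: cK)
  have const: "GG K T c (t n) = GG K T c (t 1)" if n: "1 \<le> n" "n \<le> N" for n
    using n
  proof (induction n rule: dec_induct)
    case base then show ?case by simp
  next
    case (step n)
    have "GG K T c (t (Suc n)) = GG K T c (t n)" using hyp[of n] step by simp
    then show ?case using step by simp
  qed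
  define C where "C = GG K T c (t 1)"
  define d where "d m = c m - (if m = K then C else 0)" for m
  let ?S = "t ` {1..N}"
  have inj: "inj_on t {1..N}"
  proof (rule inj_onI)
    fix x y assume xy: "x \<in> {1..N}" "y \<in> {1..N}" "t x = t y"
    show "x = y"
    proof (rule ccontr)
      assume "x \<noteq> y"
      then consider "x < y" | "y < x" by linarith
      then show False
      proof cases
        case 1 then show False using t_strict[of N t x y, OF inc] xy by simp
      next
        case 2 then show False using t_strict[of N t y x, OF inc] xy by simp
      qed
    qed
  qed
  have card: "card ?S \<ge> 2 * K + 1" using inj N by (simp add: card_image)
  have sub: "?S \<subseteq> {0..<T}"
  proof
    fix x assume "x \<in> ?S"
    then obtain n where n: "1 \<le> n" "n \<le> N" and x: "x = t n" by auto
    have "0 \<le> t 1" by (rule t1)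
    also have "t 1 \<le> t n" using t_mono[of N t 1 n, OF inc] n by simp
    finally have "0 \<le> x" using x by simp
    have "t n \<le> t N" using t_mono[of N t n N, OF inc] n by simp
    then have "x < T" using x tN by simp
    with \<open>0 \<le> x\<close> show "x \<in> {0..<T}" by simp
  qed
  have z: "(\<Sum>m\<le>2*K. d m * ee K T x m) = 0" if "x \<in> ?S" for x
  proof -
    from that obtain n where n: "1 \<le> n" "n \<le> N" and x: "x = t n" by auto
    have "(\<Sum>m\<le>2*K. d m * ee K T x m) = (\<Sum>m\<le>2*K. c m * ee K T x m) - (\<Sum>m\<le>2*K. (if m = K then C * ee K T x m else 0))"
      unfolding d_def left_diff_distrib sum_subtractf by (intro arg_cong2[where f="(-)"] refl sum.cong) auto
    also have "\<dots> = GG K T c x - C" by (simp add: Gee)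
    also have "\<dots> = 0" using const[OF n] x C_def by simp
    finally show ?thesis .
  qed
  fix m assume m: "m \<le> 2 * K"
  have "d m = 0" using trig_zero[OF T sub card z] m by simp
  then show "c m = 0" using cK by (cases "m = K") (auto simp: d_def)
qed


lemma entry_eq:
  assumes "i < N - 1" "m < 2 * K + 1"
  shows "samp_mat K T N t $$ (i, m) = FF K T m (t (i + 2)) - FF K T m (t (i + 1))"
proof -
  have e: "int m - int K = 0 \<longleftrightarrow> m = K" by simp
  have x: "exp (\<i> * of_int (int m - int K) * of_real (2 * pi / T) * of_real x) = ee K T x m" for x
    unfolding ee_def by (simp add: algebra_simps)
  have "samp_mat K T N t $$ (i,m) = (if int m - int K = 0 then complex_of_real (t (i+1+1) - t (i+1))
     else exp (\<i> * of_int (int m - int K) * of_real (2*pi/T) * of_real (t (i+1+1)))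
        - exp (\<i> * of_int (int m - int K) * of_real (2*pi/T) * of_real (t (i+1))))"
    unfolding samp_mat_def index_mat(1)[OF assms] by (simp only: case_prod_conv Let_def)
  also have "\<dots> = FF K T m (t (i + 2)) - FF K T m (t (i + 1))"
    unfolding x e FF_def by (simp add: numeral_2_eq_2)
  finally show ?thesis .
qed

lemma dim_samp[simp]: "samp_mat K T N t \<in> carrier_mat (N - 1) (2 * K + 1)"
  "dim_row (samp_mat K T N t) = N - 1" "dim_col (samp_mat K T N t) = 2 * K + 1"
  by (auto simp: samp_mat_def)

theorem theorem1:
  fixes K N :: nat and T :: real and t :: "nat \<Rightarrow> real"
  assumes "K > 0" and "T > 0"
    and "0 \<le> t 1"
    and "\<And>n. 1 \<le> n \<Longrightarrow> n < N \<Longrightarrow> t n < t (n + 1)"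
    and "t N < T"
    and "N \<ge> 2 * K + 2"
  shows "\<exists>B. B \<in> carrier_mat (2 * K + 1) (N - 1) \<and>
              B * samp_mat K T N t = 1\<^sub>m (2 * K + 1)"
proof -
  note T = assms(2) and t1 = assms(3) and inc = assms(4) and tN = assms(5) and N = assms(6)
  define M where "M = 2 * K + 1"
  define A where "A = samp_mat K T N t"
  define S where "S = samp_mat K T (2 * K + 2) t"
  have SC: "S \<in> carrier_mat M M" unfolding S_def M_def using dim_samp(1)[of K T "2*K+2" t] by simp
  have inc': "\<And>n. 1 \<le> n \<Longrightarrow> n < 2 * K + 2 \<Longrightarrow> t n < t (n + 1)" using inc N by simp
  have tN': "t (2 * K + 2) < T"
    using t_mono[of N t "2*K+2" N, OF inc] N tN by simp
  have detS: "det S \<noteq> 0"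
  proof
    assume "det S = 0"
    then obtain v where v: "v \<in> carrier_vec M" "v \<noteq> 0\<^sub>v M" "S *\<^sub>v v = 0\<^sub>v M"
      using det_0_iff_vec_prod_zero[OF SC] by blast
    define c where "c m = v $ m" for m
    have hyp: "GG K T c (t (n + 1)) = GG K T c (t n)" if n: "1 \<le> n" "n < 2 * K + 2" for n
    proof -
      have i: "n - 1 < M" using n M_def by simp
      have "0 = (S *\<^sub>v v) $ (n - 1)" using v(3) i by simp
      also have "\<dots> = (\<Sum>m\<in>{0..<M}. S $$ (n - 1, m) * v $ m)"
        using i SC v(1) by (simp add: scalar_prod_def)
      also have "\<dots> = (\<Sum>m\<le>2*K. (FF K T m (t (n + 1)) - FF K T m (t n)) * c m)"
      proof -
        have "{0..<M} = {..2*K}" unfolding M_def by auto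
        moreover have "S $$ (n - 1, m) = FF K T m (t (n + 1)) - FF K T m (t n)" if "m \<le> 2 * K" for m
          unfolding S_def using entry_eq[of "n - 1" "2*K+2" m K T t] that n by simp
        ultimately show ?thesis unfolding c_def by (intro sum.cong) auto
      qed
      also have "\<dots> = GG K T c (t (n + 1)) - GG K T c (t n)"
        unfolding GG_def by (simp add: sum_subtractf algebra_simps)
      finally show ?thesis by simp
    qed
    have "c m = 0" if "m \<le> 2 * K" for m
      using all_zero[of T t "2 * K + 2" K c, OF T t1 inc' tN' _ hyp that] by simp
    then have "v = 0\<^sub>v M" using v(1) unfolding c_def M_def by (intro eq_vecI) auto
    with v(2) show False by simp
  qed
  have "S \<in> Units (ring_mat TYPE(complex) M ())"
    by (rule det_non_zero_imp_unit[OF SC detS])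
  then obtain S' where S': "S' \<in> carrier_mat M M" "S' * S = 1\<^sub>m M"
    by (auto simp: Units_def ring_mat_def)
  define B where "B = mat M (N - 1) (\<lambda>(i, j). if j < M then S' $$ (i, j) else 0)"
  have BC: "B \<in> carrier_mat M (N - 1)" unfolding B_def by simp
  have AS: "A $$ (l, j) = S $$ (l, j)" if "l < M" "j < M" for l j
    unfolding A_def S_def using entry_eq[of l N j K T t] entry_eq[of l "2*K+2" j K T t] that N M_def by simp
  have "B * A = 1\<^sub>m M"
  proof (rule eq_matI)
    show "dim_row (B * A) = dim_row (1\<^sub>m M)" using BC by simp
    show "dim_col (B * A) = dim_col (1\<^sub>m M)" unfolding A_def M_def by simp
    fix i j assume i: "i < dim_row (1\<^sub>m M)" and j: "j < dim_col (1\<^sub>m M)"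
    then have i: "i < M" and j: "j < M" by simp_all
    have "(B * A) $$ (i, j) = (\<Sum>l\<in>{0..<N - 1}. B $$ (i, l) * A $$ (l, j))"
      using i j BC unfolding A_def M_def by (simp add: scalar_prod_def)
    also have "\<dots> = (\<Sum>l\<in>{0..<M}. B $$ (i, l) * A $$ (l, j))"
      by (rule sum.mono_neutral_right) (use N i in \<open>auto simp: B_def M_def\<close>)
    also have "\<dots> = (\<Sum>l\<in>{0..<M}. S' $$ (i, l) * S $$ (l, j))"
      by (intro sum.cong) (use i j N in \<open>auto simp: B_def AS M_def\<close>)
    also have "\<dots> = row S' i \<bullet> col S j"
      using i j S'(1) SC unfolding scalar_prod_def by simp
    also have "\<dots> = (S' * S) $$ (i, j)"
      using i j S'(1) SC by simp
    also have "\<dots> = 1\<^sub>m M $$ (i, j)" using S' by simp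
    finally show "(B * A) $$ (i, j) = 1\<^sub>m M $$ (i, j)" .
  qed
  then show ?thesis using BC unfolding A_def M_def by blast
qed

end
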